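(* Let $N,d\in\mathbb N$, let $D$ be a set and $C\subseteq D$, and let $b_0,b_1,\ldots,b_N:D\to\mathbb R$ be functions such that $b_k(\mathbf t)\ge 0$ for all $k$ and $\sum_{k=0}^N b_k(\mathbf t)=1$ for every $\mathbf t\in C$. Let $\omega_0,\ldots,\omega_N>0$ be weights and $\mathbf W_0,\ldots,\mathbf W_N\in\mathbb R^d$ control points, and define $$\mathbf S_N(\mathbf t):=\frac{\sum_{k=0}^N\omega_k\mathbf W_k b_k(\mathbf t)}{\sum_{k=0}^N\omega_k b_k(\mathbf t)}\qquad(\mathbf t\in C).$$ Fix $\mathbf t\in C$ with $b_k(\mathbf t)>0$ for $1\le k\le N$. Define $h_0:=1$, $\mathbf Q_0:=\mathbf W_0$ and, for $k=1,\ldots,N$, $$h_k:=\left(1+\frac{\omega_{k-1}b_{k-1}(\mathbf t)}{h_{k-1}\,\omega_k b_k(\mathbf t)}\right)^{-1},\qquad \mathbf Q_k:=(1-h_k)\mathbf Q_{k-1}+h_k\mathbf W_k .$$ Then these quantities are well defined and, for every $k=0,1,\ldots,N$: $h_k\in[0,1]$, $\mathbf Q_k\in\mathbb R^d$, and $\mathbf Q_k\in\operatorname{conv}\{\mathbf W_0,\mathbf W_1,\ldots,\mathbf W_k\}$ (so $\operatorname{conv}\{\mathbf Q_0,\ldots,\mathbf Q_k\}\subseteq\operatorname{conv}\{\mathbf W_0,\ldots,\mathbf W_k\}$). Moreover, $\mathbf S_N(\mathbf t)=\mathbf Q_N$.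
   Context: $\operatorname{conv}$ denotes the convex hull. The Euclidean space $\mathbb E^d$ of the paper is identified with $\mathbb R^d$. *)

theory Defs
  imports "HOL-Analysis.Analysis"
begin

text \<open>Rational Bernstein-type curve S_N and the recursive quantities h_k, Q_k,
  with the parameter point t fixed: bt k stands for b_k(t).\<close>

definition S_N :: "nat \<Rightarrow> (nat \<Rightarrow> real) \<Rightarrow> (nat \<Rightarrow> 'v::real_vector) \<Rightarrow> (nat \<Rightarrow> 'a \<Rightarrow> real) \<Rightarrow> 'a \<Rightarrow> 'v" where
  "S_N N \<omega> W b t = (1 / (\<Sum>k=0..N. \<omega> k * b k t)) *\<^sub>R (\<Sum>k=0..N. (\<omega> k * b k t) *\<^sub>R W k)"

fun hseq :: "(nat \<Rightarrow> real) \<Rightarrow> (nat \<Rightarrow> real) \<Rightarrow> nat \<Rightarrow> real" where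
  "hseq \<omega> bt 0 = 1"
| "hseq \<omega> bt (Suc k) = inverse (1 + (\<omega> k * bt k) / (hseq \<omega> bt k * (\<omega> (Suc k) * bt (Suc k))))"

fun Qseq :: "(nat \<Rightarrow> real) \<Rightarrow> (nat \<Rightarrow> real) \<Rightarrow> (nat \<Rightarrow> 'v::real_vector) \<Rightarrow> nat \<Rightarrow> 'v" where
  "Qseq \<omega> bt W 0 = W 0"
| "Qseq \<omega> bt W (Suc k) = (1 - hseq \<omega> bt (Suc k)) *\<^sub>R Qseq \<omega> bt W k + hseq \<omega> bt (Suc k) *\<^sub>R W (Suc k)"

end

theory Submission
  imports Defs
begin

lemma hlem:
  fixes \<omega> bt :: "nat \<Rightarrow> real"
  assumes nn: "\<And>k. k \<le> N \<Longrightarrow> \<omega> k * bt k \<ge> 0"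
    and pos: "\<And>k. 1 \<le> k \<Longrightarrow> k \<le> N \<Longrightarrow> \<omega> k * bt k > 0"
  shows "k \<le> N \<Longrightarrow> hseq \<omega> bt k * (\<Sum>j=0..k. \<omega> j * bt j) = \<omega> k * bt k \<and> hseq \<omega> bt k > 0 \<and> hseq \<omega> bt k \<le> 1"
proof (induction k)
  case 0
  then show ?case by simp
next
  case (Suc k)
  let ?a = "\<lambda>j. \<omega> j * bt j"
  let ?s = "\<Sum>j=0..k. ?a j"
  have IH: "hseq \<omega> bt k * ?s = ?a k" "hseq \<omega> bt k > 0" using Suc by auto
  have ap: "?a (Suc k) > 0" using pos Suc.prems by simp
  have sn: "?s \<ge> 0" using nn Suc.prems by (intro sum_nonneg) auto
  have "?a k / (hseq \<omega> bt k * ?a (Suc k)) = ?s / ?a (Suc k)"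
    using IH ap by (simp add: IH(1)[symmetric])
  moreover have "1 + ?s / ?a (Suc k) = (?a (Suc k) + ?s) / ?a (Suc k)"
  proof -
    have e: "?a (Suc k) / ?a (Suc k) = 1" using ap by (metis divide_self less_irrefl)
    show ?thesis by (simp only: add_divide_distrib e)
  qed
  ultimately have h: "hseq \<omega> bt (Suc k) = ?a (Suc k) / (?s + ?a (Suc k))"
    by simp
  have ss: "(\<Sum>j=0..Suc k. ?a j) = ?s + ?a (Suc k)" by simp
  show ?case unfolding ss h using ap sn by (simp add: field_simps)
qed

lemma qlem:
  fixes \<omega> bt :: "nat \<Rightarrow> real" and W :: "nat \<Rightarrow> 'v::real_vector"
  assumes nn: "\<And>k. k \<le> N \<Longrightarrow> \<omega> k * bt k \<ge> 0"
    and pos: "\<And>k. 1 \<le> k \<Longrightarrow> k \<le> N \<Longrightarrow> \<omega> k * bt k > 0"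
  shows "k \<le> N \<Longrightarrow> (\<Sum>j=0..k. \<omega> j * bt j) *\<^sub>R Qseq \<omega> bt W k = (\<Sum>j=0..k. (\<omega> j * bt j) *\<^sub>R W j)"
proof (induction k)
  case 0
  then show ?case by simp
next
  case (Suc k)
  let ?a = "\<lambda>j. \<omega> j * bt j"
  let ?s = "\<Sum>j=0..k. ?a j"
  let ?h = "hseq \<omega> bt (Suc k)"
  have H: "?h * (?s + ?a (Suc k)) = ?a (Suc k)"
    using hlem[where N=N and \<omega>=\<omega> and bt=bt, OF nn pos Suc.prems] by simp
  have "(?s + ?a (Suc k)) *\<^sub>R Qseq \<omega> bt W (Suc k)
     = ((?s + ?a (Suc k)) * (1 - ?h)) *\<^sub>R Qseq \<omega> bt W k + ((?s + ?a (Suc k)) * ?h) *\<^sub>R W (Suc k)"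
    by (simp add: scaleR_add_right)
  also have "\<dots> = ?s *\<^sub>R Qseq \<omega> bt W k + ?a (Suc k) *\<^sub>R W (Suc k)"
    using H by (simp add: algebra_simps)
  finally show ?case using Suc by simp
qed

lemma clem:
  fixes \<omega> bt :: "nat \<Rightarrow> real" and W :: "nat \<Rightarrow> 'v::real_vector"
  assumes nn: "\<And>k. k \<le> N \<Longrightarrow> \<omega> k * bt k \<ge> 0"
    and pos: "\<And>k. 1 \<le> k \<Longrightarrow> k \<le> N \<Longrightarrow> \<omega> k * bt k > 0"
  shows "k \<le> N \<Longrightarrow> Qseq \<omega> bt W k \<in> convex hull (W ` {0..k})"
proof (induction k)
  case 0
  then show ?case by (simp add: hull_inc)
next
  case (Suc k)
  let ?h = "hseq \<omega> bt (Suc k)"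
  have h: "0 \<le> ?h" "?h \<le> 1" using hlem[where N=N and \<omega>=\<omega> and bt=bt, OF nn pos Suc.prems] by auto
  have "Qseq \<omega> bt W k \<in> convex hull (W ` {0..Suc k})"
  proof -
    have "W ` {0..k} \<subseteq> W ` {0..Suc k}" by auto
    then show ?thesis using Suc hull_mono[of "W ` {0..k}" "W ` {0..Suc k}"] by auto
  qed
  moreover have "W (Suc k) \<in> convex hull (W ` {0..Suc k})" by (intro hull_inc) auto
  ultimately show ?case using h
    by (simp add: convexD_alt[OF convex_convex_hull])
qed

theorem theorem1:
  fixes N :: nat and D C :: "'a set" and b :: "nat \<Rightarrow> 'a \<Rightarrow> real"
    and \<omega> :: "nat \<Rightarrow> real" and W :: "nat \<Rightarrow> real ^ 'd" and t :: 'a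
  assumes "C \<subseteq> D"
    and "\<And>k s. s \<in> C \<Longrightarrow> b k s \<ge> 0"
    and "\<And>s. s \<in> C \<Longrightarrow> (\<Sum>k=0..N. b k s) = 1"
    and "\<And>k. k \<le> N \<Longrightarrow> \<omega> k > 0"
    and "t \<in> C"
    and "\<And>k. 1 \<le> k \<Longrightarrow> k \<le> N \<Longrightarrow> b k t > 0"
  shows "(\<forall>k\<in>{1..N}. hseq \<omega> (\<lambda>j. b j t) (k - 1) * (\<omega> k * b k t) \<noteq> 0 \<and>
            1 + (\<omega> (k - 1) * b (k - 1) t) / (hseq \<omega> (\<lambda>j. b j t) (k - 1) * (\<omega> k * b k t)) \<noteq> 0)
       \<and> (\<Sum>k=0..N. \<omega> k * b k t) \<noteq> 0
       \<and> (\<forall>k\<le>N. hseq \<omega> (\<lambda>j. b j t) k \<in> {0..1}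
              \<and> Qseq \<omega> (\<lambda>j. b j t) W k \<in> convex hull (W ` {0..k})
              \<and> convex hull (Qseq \<omega> (\<lambda>j. b j t) W ` {0..k}) \<subseteq> convex hull (W ` {0..k}))
       \<and> S_N N \<omega> W b t = Qseq \<omega> (\<lambda>j. b j t) W N"
proof -
  let ?bt = "\<lambda>j. b j t"
  have nn: "\<And>k. k \<le> N \<Longrightarrow> \<omega> k * ?bt k \<ge> 0"
    using assms(2,4,5) by (simp add: less_imp_le)
  have pos: "\<And>k. 1 \<le> k \<Longrightarrow> k \<le> N \<Longrightarrow> \<omega> k * ?bt k > 0"
    using assms(4,6) by simp
  note H = hlem[where N=N and \<omega>=\<omega> and bt="\<lambda>j. b j t", OF nn pos] and Q = qlem[where N=N and \<omega>=\<omega> and bt="\<lambda>j. b j t" and W=W, OF nn pos] and CC = clem[where N=N and \<omega>=\<omega> and bt="\<lambda>j. b j t" and W=W, OF nn pos]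
  have A: "\<forall>k\<in>{1..N}. hseq \<omega> ?bt (k - 1) * (\<omega> k * b k t) \<noteq> 0 \<and>
            1 + (\<omega> (k - 1) * b (k - 1) t) / (hseq \<omega> ?bt (k - 1) * (\<omega> k * b k t)) \<noteq> 0"
  proof
    fix k assume k: "k \<in> {1..N}"
    have p1: "hseq \<omega> ?bt (k - 1) > 0" using H[of "k-1"] k by auto
    have p2: "\<omega> k * b k t > 0" using pos k by auto
    have p3: "\<omega> (k - 1) * b (k - 1) t \<ge> 0" using nn[of "k-1"] k by auto
    have "(\<omega> (k - 1) * b (k - 1) t) / (hseq \<omega> ?bt (k - 1) * (\<omega> k * b k t)) \<ge> 0"
      using p1 p2 p3 by simp
    then show "hseq \<omega> ?bt (k - 1) * (\<omega> k * b k t) \<noteq> 0 \<and>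
            1 + (\<omega> (k - 1) * b (k - 1) t) / (hseq \<omega> ?bt (k - 1) * (\<omega> k * b k t)) \<noteq> 0"
      using p1 p2 by auto
  qed
  have SP: "(\<Sum>k=0..N. \<omega> k * b k t) > 0"
  proof (cases N)
    case 0
    then show ?thesis using assms(3)[OF assms(5)] assms(4)[of 0] by simp
  next
    case (Suc m)
    have "\<omega> N * b N t \<le> (\<Sum>k=0..N. \<omega> k * b k t)"
      using nn by (intro member_le_sum) auto
    moreover have "\<omega> N * b N t > 0" using pos Suc by simp
    ultimately show ?thesis by linarith
  qed
  have B: "\<forall>k\<le>N. hseq \<omega> ?bt k \<in> {0..1}
              \<and> Qseq \<omega> ?bt W k \<in> convex hull (W ` {0..k})
              \<and> convex hull (Qseq \<omega> ?bt W ` {0..k}) \<subseteq> convex hull (W ` {0..k})"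
  proof (intro allI impI conjI)
    fix k assume k: "k \<le> N"
    show "hseq \<omega> ?bt k \<in> {0..1}" using H[of k] k by auto
    show "Qseq \<omega> ?bt W k \<in> convex hull (W ` {0..k})" using CC[of k] k by auto
    show "convex hull (Qseq \<omega> ?bt W ` {0..k}) \<subseteq> convex hull (W ` {0..k})"
    proof (rule hull_minimal)
      show "Qseq \<omega> ?bt W ` {0..k} \<subseteq> convex hull (W ` {0..k})"
      proof
        fix x assume "x \<in> Qseq \<omega> ?bt W ` {0..k}"
        then obtain j where j: "j \<le> k" "x = Qseq \<omega> ?bt W j" by auto
        have "x \<in> convex hull (W ` {0..j})" using CC[of j] j k by simp
        moreover have "convex hull (W ` {0..j}) \<subseteq> convex hull (W ` {0..k})"
          using j by (intro hull_mono) auto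
        ultimately show "x \<in> convex hull (W ` {0..k})" by blast
      qed
    qed (rule convex_convex_hull)
  qed
  have S: "S_N N \<omega> W b t = Qseq \<omega> ?bt W N"
  proof -
    have e: "(\<Sum>j=0..N. \<omega> j * b j t) *\<^sub>R Qseq \<omega> ?bt W N = (\<Sum>j=0..N. (\<omega> j * b j t) *\<^sub>R W j)"
      using Q[of N] by simp
    show ?thesis unfolding S_N_def e[symmetric] using SP by simp
  qed
  show ?thesis using A SP B S by simp
qed

end
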